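(* Let $\mathcal{X}$ be a finite set, $\phi\notin\mathcal{X}$, $L,T\in\mathbb{N}$, positions $i_0,\dots,i_{T-1}\in\{0,\dots,L-1\}$ fixed, and $\Pi_t$ ($t=0,\dots,T-1$) probability distributions on $\mathcal{X}\cup\{\phi\}$. Let $X_0\sim P^*$ on $\mathcal{X}^L$, let $Z_0,\dots,Z_{T-1}$ be independent, independent of $X_0$, with $Z_t\sim\Pi_t$, and define the forward process by $X_{t+1,j}=X_{t,j}$ for $j\ne i_t$, $X_{t+1,i_t}=X_{t,i_t}$ if $Z_t=\phi$, and $X_{t+1,i_t}=Z_t$ if $Z_t\in\mathcal{X}$. Then for any $t\in\{0,\dots,T-1\}$, any $x\in\mathcal{X}^L$ and any $a\in\mathcal{X}$ (for which the quantities below are well defined, i.e. $\mathbb{P}(Z_t=\phi)>0$ and the conditioning events and the denominator are nonzero), $$\mathbb{P}\big(X_{t,i_t}=a\mid X_{t+1,-i_t}=x_{-i_t}\big)=\frac{\mathbb{P}(Z_t=a)}{\mathbb{P}(Z_t=\phi)}\left(\frac{1}{\mathbb{P}\big(Z_t=a\mid X_{t+1,-i_t}=x_{-i_t},\,X_{t+1,i_t}=a\big)}-1\right).$$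
   Context: For $x\in\mathcal{X}^L$ and $i\in\{0,\dots,L-1\}$, $x_i$ is the $i$-th coordinate and $x_{-i}\in\mathcal{X}^{L-1}$ is the sequence obtained by deleting the $i$-th coordinate. *)

theory Defs
  imports "HOL-Probability.Probability"
begin

definition del_at :: "nat \<Rightarrow> 'a list \<Rightarrow> 'a list" where
  "del_at i xs = take i xs @ drop (Suc i) xs"

text \<open>Forward process. The symbol phi is represented by None; z t is the noise Z_t.\<close>
fun fwd :: "(nat \<Rightarrow> nat) \<Rightarrow> 'x list \<Rightarrow> (nat \<Rightarrow> 'x option) \<Rightarrow> nat \<Rightarrow> 'x list" where
  "fwd i x0 z 0 = x0"
| "fwd i x0 z (Suc t) =
     (case z t of None \<Rightarrow> fwd i x0 z t | Some a \<Rightarrow> (fwd i x0 z t)[i t := a])"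

definition sample_pmf ::
  "'x list pmf \<Rightarrow> (nat \<Rightarrow> 'x option pmf) \<Rightarrow> nat \<Rightarrow> ('x list \<times> (nat \<Rightarrow> 'x option)) pmf" where
  "sample_pmf P0 Pd T = pair_pmf P0 (Pi_pmf {..<T} None Pd)"

definition cprob :: "'a pmf \<Rightarrow> 'a set \<Rightarrow> 'a set \<Rightarrow> real" where
  "cprob M A B = measure_pmf.prob M (A \<inter> B) / measure_pmf.prob M B"

end

theory Submission
  imports Defs
begin
lemma pair_sum:
  fixes D :: "'a::finite pmf" and V :: "'b pmf"
  shows "measure (pair_pmf D V) B = (\<Sum>y\<in>UNIV. pmf D y * measure V {Y. (y,Y)\<in>B})"
proof -
  have "pair_pmf D V = bind_pmf D (\<lambda>y. map_pmf (Pair y) V)"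
    by (simp add: pair_pmf_def map_pmf_def)
  hence "emeasure (pair_pmf D V) B = (\<integral>\<^sup>+y. emeasure (map_pmf (Pair y) V) B \<partial>D)"
    by simp
  also have "\<dots> = (\<Sum>y\<in>UNIV. emeasure (map_pmf (Pair y) V) B * pmf D y)"
    by (rule nn_integral_measure_pmf_support) auto
  also have "\<dots> = (\<Sum>y\<in>UNIV. ennreal (pmf D y * measure V {Y. (y,Y)\<in>B}))"
    by (intro sum.cong refl) (simp add: measure_pmf.emeasure_eq_measure ennreal_mult' mult.commute vimage_def)
  also have "\<dots> = ennreal (\<Sum>y\<in>UNIV. pmf D y * measure V {Y. (y,Y)\<in>B})"
    by (rule sum_ennreal) simp
  finally show ?thesis
    by (simp add: measure_pmf.emeasure_eq_measure) (smt (verit) ennreal_inj measure_nonneg sum_nonneg mult_nonneg_nonneg pmf_nonneg)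
qed

lemma fwd_cong: "(\<forall>s<n. z s = z' s) \<Longrightarrow> fwd i x0 z n = fwd i x0 z' n"
  by (induction n) (auto split: option.splits)

lemma fwd_len: "length (fwd i x0 z n) = length x0"
  by (induction n) (auto split: option.splits)

lemma del_upd: "k < length Y \<Longrightarrow> del_at k (Y[k:=b]) = del_at k Y"
  by (simp add: del_at_def)

lemma meas_cong:
  assumes "\<And>Y. Y \<in> set_pmf V \<Longrightarrow> (Y \<in> B) = (Y \<in> B')"
  shows "measure V B = measure V B'"
proof -
  have "B \<inter> set_pmf V = B' \<inter> set_pmf V" using assms by blast
  thus ?thesis by (metis measure_Int_set_pmf)
qed

lemma decomp:
  fixes P0 :: "'x::finite list pmf" and Pd :: "nat \<Rightarrow> 'x option pmf"
  assumes "t < T"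
  shows "measure (sample_pmf P0 Pd T) {\<omega>. S (snd \<omega> t) (fwd i (fst \<omega>) (snd \<omega>) t)} =
    (\<Sum>y\<in>UNIV. pmf (Pd t) y * measure (map_pmf (\<lambda>(x0,f). fwd i x0 f t) (pair_pmf P0 (Pi_pmf ({..<T} - {t}) None Pd))) {Y. S y Y})"
proof -
  define A where "A = {..<T} - {t}"
  define PA where "PA = Pi_pmf A None Pd"
  have TA: "{..<T} = insert t A" using assms by (auto simp: A_def)
  have PI: "Pi_pmf {..<T} None Pd = map_pmf (\<lambda>(y,f). f(t:=y)) (pair_pmf (Pd t) PA)"
    unfolding TA PA_def by (rule Pi_pmf_insert) (auto simp: A_def)
  define G where "G = (\<lambda>(y::'x option, (x0::'x list, f::nat \<Rightarrow> 'x option)). (x0, f(t:=y)))"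
  have M: "sample_pmf P0 Pd T = map_pmf G (pair_pmf (Pd t) (pair_pmf P0 PA))"
    unfolding sample_pmf_def PI G_def
    by (simp add: pair_pmf_def map_pmf_def bind_assoc_pmf bind_return_pmf) (rule bind_commute_pmf)
  have "measure (sample_pmf P0 Pd T) {\<omega>. S (snd \<omega> t) (fwd i (fst \<omega>) (snd \<omega>) t)}
     = (\<Sum>y\<in>UNIV. pmf (Pd t) y * measure (pair_pmf P0 PA) {W. (y,W) \<in> G -` {\<omega>. S (snd \<omega> t) (fwd i (fst \<omega>) (snd \<omega>) t)}})"
    unfolding M measure_map_pmf by (rule pair_sum)
  also have "\<dots> = (\<Sum>y\<in>UNIV. pmf (Pd t) y * measure (map_pmf (\<lambda>(x0,f). fwd i x0 f t) (pair_pmf P0 PA)) {Y. S y Y})"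
  proof (intro sum.cong refl arg_cong2[where f="(*)"])
    fix y :: "'x option"
    have "\<And>x0 f. fwd i x0 (f(t:=y)) t = fwd i x0 f t" by (rule fwd_cong) auto
    thus "measure (pair_pmf P0 PA) {W. (y,W) \<in> G -` {\<omega>. S (snd \<omega> t) (fwd i (fst \<omega>) (snd \<omega>) t)}} =
      measure (map_pmf (\<lambda>(x0,f). fwd i x0 f t) (pair_pmf P0 PA)) {Y. S y Y}"
      unfolding measure_map_pmf G_def by (intro arg_cong[where f="measure _"]) (auto simp: vimage_def)
  qed
  finally show ?thesis unfolding PA_def A_def .
qed
theorem lemma3:
  fixes P0 :: "'x::finite list pmf" and Pd :: "nat \<Rightarrow> 'x option pmf"
    and i :: "nat \<Rightarrow> nat" and L T t :: nat and x :: "'x list" and a :: 'x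
    and M :: "('x list \<times> (nat \<Rightarrow> 'x option)) pmf"
    and E F :: "('x list \<times> (nat \<Rightarrow> 'x option)) set"
  assumes P0_len: "\<forall>xs \<in> set_pmf P0. length xs = L"
    and i_range: "\<forall>s<T. i s < L"
    and t_lt: "t < T"
    and x_len: "length x = L"
  defines "M \<equiv> sample_pmf P0 Pd T"
    and "E \<equiv> {\<omega>. del_at (i t) (fwd i (fst \<omega>) (snd \<omega>) (Suc t)) = del_at (i t) x}"
    and "F \<equiv> {\<omega>. fwd i (fst \<omega>) (snd \<omega>) (Suc t) ! i t = a}"
  assumes phi_pos: "pmf (Pd t) None > 0"
    and E_pos: "measure_pmf.prob M E > 0"
    and EF_pos: "measure_pmf.prob M (E \<inter> F) > 0"
    and den_nz: "cprob M {\<omega>. snd \<omega> t = Some a} (E \<inter> F) \<noteq> 0"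
  shows "cprob M {\<omega>. fwd i (fst \<omega>) (snd \<omega>) t ! i t = a} E =
           pmf (Pd t) (Some a) / pmf (Pd t) None *
           (1 / cprob M {\<omega>. snd \<omega> t = Some a} (E \<inter> F) - 1)"
proof -
  define k where "k = i t"
  have kL: "k < L" using i_range t_lt by (simp add: k_def)
  define V where "V = map_pmf (\<lambda>(x0,f). fwd i x0 f t) (pair_pmf P0 (Pi_pmf ({..<T} - {t}) None Pd))"
  have Vlen: "length Y = L" if "Y \<in> set_pmf V" for Y
    using that P0_len by (auto simp: V_def fwd_len)
  have kY: "k < length Y" if "Y \<in> set_pmf V" for Y using Vlen[OF that] kL by simp
  define D where "D = Pd t"
  define p where "p = measure V {Y. del_at k Y = del_at k x \<and> Y ! k = a}"
  define q where "q = measure V {Y. del_at k Y = del_at k x}"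
  have dec: "measure M {\<omega>. S (snd \<omega> t) (fwd i (fst \<omega>) (snd \<omega>) t)} =
    (\<Sum>y\<in>UNIV. pmf D y * measure V {Y. S y Y})" for S
    unfolding M_def V_def D_def by (rule decomp[OF t_lt])
  define up where "up = (\<lambda>y Y. case y of None \<Rightarrow> Y | Some b \<Rightarrow> (Y::'x list)[k:=b])"
  have delup: "del_at k (up y Y) = del_at k Y" if "length Y = L" for y Y
    using that kL del_upd by (auto simp: up_def split: option.splits)
  have sum1: "(\<Sum>y\<in>UNIV. pmf D y * c) = c" for c
    by (simp add: sum_distrib_right[symmetric] sum_pmf_eq_1)
  have sumopt: "(\<Sum>y\<in>UNIV. g y) = g None + (\<Sum>b\<in>UNIV. g (Some b))" for g :: "'x option \<Rightarrow> real"
    by (simp add: UNIV_option_conv sum.reindex)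
  have E': "E = {\<omega>. (\<lambda>y Y. del_at k (up y Y) = del_at k x) (snd \<omega> t) (fwd i (fst \<omega>) (snd \<omega>) t)}"
    unfolding E_def up_def k_def by simp
  have EF': "E \<inter> F = {\<omega>. (\<lambda>y Y. del_at k (up y Y) = del_at k x \<and> up y Y ! k = a) (snd \<omega> t) (fwd i (fst \<omega>) (snd \<omega>) t)}"
    unfolding E_def F_def up_def k_def by auto
  have N': "{\<omega>. fwd i (fst \<omega>) (snd \<omega>) t ! i t = a} \<inter> E = {\<omega>. (\<lambda>y Y. Y ! k = a \<and> del_at k (up y Y) = del_at k x) (snd \<omega> t) (fwd i (fst \<omega>) (snd \<omega>) t)}"
    unfolding E_def up_def k_def by auto
  have ZEF': "{\<omega>. snd \<omega> t = Some a} \<inter> (E \<inter> F) = {\<omega>. (\<lambda>y Y. y = Some a \<and> del_at k (up y Y) = del_at k x \<and> up y Y ! k = a) (snd \<omega> t) (fwd i (fst \<omega>) (snd \<omega>) t)}"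
    unfolding E_def F_def up_def k_def by auto
  have PE: "measure M E = q"
  proof -
    have "measure V {Y. del_at k (up y Y) = del_at k x} = q" for y
      unfolding q_def by (rule meas_cong) (simp add: delup Vlen)
    moreover have "measure M E = (\<Sum>y\<in>UNIV. pmf D y * measure V {Y. del_at k (up y Y) = del_at k x})"
      using dec[of "\<lambda>y Y. del_at k (up y Y) = del_at k x"] by (simp only: E')
    ultimately show ?thesis by (simp add: sum1)
  qed
  have PN: "measure M ({\<omega>. fwd i (fst \<omega>) (snd \<omega>) t ! i t = a} \<inter> E) = p"
  proof -
    have "measure V {Y. Y ! k = a \<and> del_at k (up y Y) = del_at k x} = p" for y
      unfolding p_def by (rule meas_cong) (auto simp: delup Vlen)
    moreover have "measure M ({\<omega>. fwd i (fst \<omega>) (snd \<omega>) t ! i t = a} \<inter> E) = (\<Sum>y\<in>UNIV. pmf D y * measure V {Y. Y ! k = a \<and> del_at k (up y Y) = del_at k x})"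
      using dec[of "\<lambda>y Y. Y ! k = a \<and> del_at k (up y Y) = del_at k x"] by (simp only: N')
    ultimately show ?thesis by (simp add: sum1)
  qed
  have PEF: "measure M (E \<inter> F) = pmf D None * p + pmf D (Some a) * q"
  proof -
    have c0: "measure V {Y. del_at k (up None Y) = del_at k x \<and> up None Y ! k = a} = p"
      unfolding p_def up_def by simp
    have c1: "measure V {Y. del_at k (up (Some b) Y) = del_at k x \<and> up (Some b) Y ! k = a} = (if b = a then q else 0)" for b
    proof (cases "b = a")
      case True thus ?thesis unfolding q_def by simp (rule meas_cong, auto simp: up_def del_upd dest!: kY)
    next
      case False
      have "measure V {Y. del_at k (up (Some b) Y) = del_at k x \<and> up (Some b) Y ! k = a} = measure V {}"
        by (rule meas_cong) (use False Vlen kL in \<open>auto simp: up_def\<close>)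
      thus ?thesis using False by simp
    qed
    have "measure M (E \<inter> F) = (\<Sum>y\<in>UNIV. pmf D y * measure V {Y. del_at k (up y Y) = del_at k x \<and> up y Y ! k = a})"
      using dec[of "\<lambda>y Y. del_at k (up y Y) = del_at k x \<and> up y Y ! k = a"] by (simp only: EF')
    then show ?thesis unfolding sumopt c0 c1
      by (simp add: if_distrib[of "\<lambda>z. _ * z"] cong: if_cong)
  qed
  have PZ: "measure M ({\<omega>. snd \<omega> t = Some a} \<inter> (E \<inter> F)) = pmf D (Some a) * q"
  proof -
    have c: "measure V {Y. y = Some a \<and> del_at k (up y Y) = del_at k x \<and> up y Y ! k = a} = (if y = Some a then q else 0)" for y
    proof (cases "y = Some a")
      case True thus ?thesis unfolding q_def by simp (rule meas_cong, auto simp: up_def del_upd dest!: kY)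
    qed simp
    have "measure M ({\<omega>. snd \<omega> t = Some a} \<inter> (E \<inter> F)) = (\<Sum>y\<in>UNIV. pmf D y * measure V {Y. y = Some a \<and> del_at k (up y Y) = del_at k x \<and> up y Y ! k = a})"
      using dec[of "\<lambda>y Y. y = Some a \<and> del_at k (up y Y) = del_at k x \<and> up y Y ! k = a"] by (simp only: ZEF')
    then show ?thesis unfolding c
      by (simp add: if_distrib[of "\<lambda>z. _ * z"] cong: if_cong)
  qed
  have q0: "q > 0" using E_pos PE by simp
  have den: "pmf D None * p + pmf D (Some a) * q > 0" using EF_pos PEF by simp
  have pa: "pmf D (Some a) \<noteq> 0" using den_nz unfolding cprob_def PZ PEF by auto
  have pN: "pmf D None > 0" using phi_pos D_def by simp
  show ?thesis
    unfolding cprob_def PN PE PZ PEF D_def[symmetric]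
    using q0 den pa pN by (simp add: field_simps)
qed

end
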